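(* Let $d\ge 3$ be an integer such that $d$ is odd or $d\equiv 0\pmod 4$. Then the hypercube $Q_d$ is $\mathbb{Z}_2^d$-distance antimagic.
   Context: $Q_d$ is the graph with vertex set $\mathbb{Z}_2^d$ (binary strings of length $d$), two vertices adjacent iff they differ in exactly one coordinate. For a graph $G$ with $n$ vertices and an Abelian group $A$ of order $n$ (written additively), and a bijection $f:V(G)\to A$, the weight of $x$ is $w_f(x)=\sum_{y\in N(x)} f(y)$ computed in $A$ ($N(x)$ the open neighbourhood). $f$ is an $A$-distance antimagic labelling if all weights are pairwise distinct; $G$ is $A$-distance antimagic if it admits such a labelling. *)

theory Defs
  imports "HOL-Algebra.FiniteProduct"
begin

definition hcube_verts :: "nat \<Rightarrow> bool list set" where
  "hcube_verts d = {xs. length xs = d}"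

definition hcube_adj :: "nat \<Rightarrow> bool list \<Rightarrow> bool list \<Rightarrow> bool" where
  "hcube_adj d x y \<longleftrightarrow> length x = d \<and> length y = d \<and> card {i. i < d \<and> x ! i \<noteq> y ! i} = 1"

definition Z2pow :: "nat \<Rightarrow> bool list monoid" where
  "Z2pow d = \<lparr> carrier = {xs. length xs = d},
               mult = (\<lambda>x y. map2 (\<lambda>a b. a \<noteq> b) x y),
               one = replicate d False \<rparr>"

definition nbhd :: "'v set \<Rightarrow> ('v \<Rightarrow> 'v \<Rightarrow> bool) \<Rightarrow> 'v \<Rightarrow> 'v set" where
  "nbhd V E x = {y \<in> V. E x y}"

definition dweight :: "('a, 'b) monoid_scheme \<Rightarrow> 'v set \<Rightarrow> ('v \<Rightarrow> 'v \<Rightarrow> bool) \<Rightarrow> ('v \<Rightarrow> 'a) \<Rightarrow> 'v \<Rightarrow> 'a" where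
  "dweight G V E f x = finprod G f (nbhd V E x)"

definition distance_antimagic_labelling ::
  "('a, 'b) monoid_scheme \<Rightarrow> 'v set \<Rightarrow> ('v \<Rightarrow> 'v \<Rightarrow> bool) \<Rightarrow> ('v \<Rightarrow> 'a) \<Rightarrow> bool" where
  "distance_antimagic_labelling G V E f \<longleftrightarrow>
     bij_betw f V (carrier G) \<and> inj_on (dweight G V E f) V"

definition distance_antimagic ::
  "('a, 'b) monoid_scheme \<Rightarrow> 'v set \<Rightarrow> ('v \<Rightarrow> 'v \<Rightarrow> bool) \<Rightarrow> bool" where
  "distance_antimagic G V E \<longleftrightarrow> (\<exists>f. distance_antimagic_labelling G V E f)"

end

theory Submission imports Defs begin
lemma Z2_comm: "comm_monoid (Z2pow d)"
  unfolding comm_monoid_def monoid_def comm_monoid_axioms_def Z2pow_def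
  by (auto intro!: nth_equalityI)

lemma finprod_Z2:
  assumes "finite A" "\<forall>a\<in>A. length (h a) = d"
  shows "finprod (Z2pow d) h A = map (\<lambda>j. odd (\<Sum>a\<in>A. of_bool (h a ! j)::nat)) [0..<d]"
  using assms
proof (induction A rule: finite_induct)
  case empty
  interpret comm_monoid "Z2pow d" by (rule Z2_comm)
  have "finprod (Z2pow d) h {} = \<one>\<^bsub>Z2pow d\<^esub>" by (rule finprod_empty)
  also have "\<one>\<^bsub>Z2pow d\<^esub> = replicate d False" by (simp add: Z2pow_def)
  finally have "finprod (Z2pow d) h {} = replicate d False" .
  then show ?case by (auto intro!: nth_equalityI)
next
  case (insert a A)
  interpret comm_monoid "Z2pow d" by (rule Z2_comm)
  have "finprod (Z2pow d) h (insert a A) = h a \<otimes>\<^bsub>Z2pow d\<^esub> finprod (Z2pow d) h A"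
    using insert by (intro finprod_insert) (auto simp: Z2pow_def)
  also have "\<dots> = map2 (\<lambda>x y. x \<noteq> y) (h a) (map (\<lambda>j. odd (\<Sum>a\<in>A. of_bool (h a ! j)::nat)) [0..<d])"
    using insert by (simp add: Z2pow_def)
  finally have e: "finprod (Z2pow d) h (insert a A) = map2 (\<lambda>x y. x \<noteq> y) (h a) (map (\<lambda>j. odd (\<Sum>a\<in>A. of_bool (h a ! j)::nat)) [0..<d])" .
  have la: "length (h a) = d" using insert by simp
  show ?case unfolding e
  proof (rule nth_equalityI)
    show "length (map2 (\<lambda>x y. x \<noteq> y) (h a) (map (\<lambda>j. odd (\<Sum>a\<in>A. of_bool (h a ! j)::nat)) [0..<d])) = length (map (\<lambda>j. odd (\<Sum>a\<in>insert a A. of_bool (h a ! j)::nat)) [0..<d])"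
      using la by simp
    fix j assume "j < length (map2 (\<lambda>x y. x \<noteq> y) (h a) (map (\<lambda>j. odd (\<Sum>a\<in>A. of_bool (h a ! j)::nat)) [0..<d]))"
    hence j: "j < d" using la by simp
    have "(\<Sum>a\<in>insert a A. of_bool (h a ! j)::nat) = of_bool (h a ! j) + (\<Sum>a\<in>A. of_bool (h a ! j))"
      using insert(1,2) by (rule sum.insert)
    then show "map2 (\<lambda>x y. x \<noteq> y) (h a) (map (\<lambda>j. odd (\<Sum>a\<in>A. of_bool (h a ! j)::nat)) [0..<d]) ! j = map (\<lambda>j. odd (\<Sum>a\<in>insert a A. of_bool (h a ! j)::nat)) [0..<d] ! j"
      using j la by (simp del: sum_of_bool_eq)
  qed
qed

lemma nbhd_cube:
  assumes "length x = d"
  shows "nbhd (hcube_verts d) (hcube_adj d) x = (\<lambda>i. x[i:=\<not>x!i]) ` {..<d}"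
proof -
  have "y \<in> (\<lambda>i. x[i:=\<not>x!i]) ` {..<d}" if "length y = d" "card {i. i < d \<and> x ! i \<noteq> y ! i} = 1" for y
  proof -
    from that(2) obtain i where i: "{i. i < d \<and> x ! i \<noteq> y ! i} = {i}" by (auto simp: card_Suc_eq)
    hence "i < d" "x!i \<noteq> y!i" by auto
    moreover have "y = x[i:=\<not>x!i]"
    proof (rule nth_equalityI)
      show "length y = length (x[i:=\<not>x!i])" using that assms by simp
      fix k assume "k < length y"
      thus "y ! k = x[i:=\<not>x!i] ! k" using i \<open>x!i \<noteq> y!i\<close> that assms
        by (cases "k = i") auto
    qed
    ultimately show ?thesis by auto
  qed
  moreover have "card {k. k < d \<and> x ! k \<noteq> x[i:=\<not>x!i] ! k} = 1" if "i < d" for i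
  proof -
    have "{k. k < d \<and> x ! k \<noteq> x[i:=\<not>x!i] ! k} = {i}"
      apply (rule Set.set_eqI)
      using that assms
      apply (case_tac "xa = i")
       apply auto
      done
    thus ?thesis by simp
  qed
  ultimately show ?thesis using assms
    unfolding nbhd_def hcube_verts_def hcube_adj_def by auto
qed

lemma inj_flip: "length x = d \<Longrightarrow> inj_on (\<lambda>i. x[i:=\<not>x!i]) {..<d}"
  unfolding inj_on_def
  by (metis lessThan_iff nth_list_update_eq nth_list_update_neq)

lemma dweight_cube:
  assumes "length x = d" "\<And>y. length y = d \<Longrightarrow> length (f y) = d"
  shows "dweight (Z2pow d) (hcube_verts d) (hcube_adj d) f x =
     map (\<lambda>j. odd (\<Sum>i<d. of_bool (f (x[i:=\<not>x!i]) ! j)::nat)) [0..<d]"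
proof -
  have "dweight (Z2pow d) (hcube_verts d) (hcube_adj d) f x = finprod (Z2pow d) f ((\<lambda>i. x[i:=\<not>x!i]) ` {..<d})"
    unfolding dweight_def nbhd_cube[OF assms(1)] ..
  also have "\<dots> = map (\<lambda>j. odd (\<Sum>a\<in>(\<lambda>i. x[i:=\<not>x!i]) ` {..<d}. of_bool (f a ! j)::nat)) [0..<d]"
    using assms by (intro finprod_Z2) auto
  also have "\<dots> = map (\<lambda>j. odd (\<Sum>i<d. of_bool (f (x[i:=\<not>x!i]) ! j)::nat)) [0..<d]"
    by (simp add: sum.reindex[OF inj_flip[OF assms(1)]])
  finally show ?thesis .
qed


type_synonym b4 = "bool \<times> bool \<times> bool \<times> bool"

fun g4 :: "b4 \<Rightarrow> b4" where
  "g4 (False, False, False, False) = (True, False, False, False)"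
|   "g4 (False, False, False, True) = (False, False, False, True)"
|   "g4 (False, False, True, False) = (True, True, True, True)"
|   "g4 (False, False, True, True) = (False, True, True, False)"
|   "g4 (False, True, False, False) = (True, False, True, True)"
|   "g4 (False, True, False, True) = (True, False, False, True)"
|   "g4 (False, True, True, False) = (False, False, True, True)"
|   "g4 (False, True, True, True) = (True, True, True, False)"
|   "g4 (True, False, False, False) = (False, False, False, False)"
|   "g4 (True, False, False, True) = (False, True, False, True)"
|   "g4 (True, False, True, False) = (True, False, True, False)"
|   "g4 (True, False, True, True) = (False, True, False, False)"
|   "g4 (True, True, False, False) = (True, True, False, True)"
|   "g4 (True, True, False, True) = (True, True, False, False)"
|   "g4 (True, True, True, False) = (False, True, True, True)"
|   "g4 (True, True, True, True) = (False, False, True, False)"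

fun W4inv :: "b4 \<Rightarrow> b4" where
  "W4inv (False, False, False, False) = (True, True, False, False)"
|   "W4inv (False, False, False, True) = (True, True, True, True)"
|   "W4inv (False, False, True, False) = (False, False, False, True)"
|   "W4inv (False, False, True, True) = (True, True, False, True)"
|   "W4inv (False, True, False, False) = (False, False, True, True)"
|   "W4inv (False, True, False, True) = (False, False, False, False)"
|   "W4inv (False, True, True, False) = (True, True, True, False)"
|   "W4inv (False, True, True, True) = (False, False, True, False)"
|   "W4inv (True, False, False, False) = (False, True, False, True)"
|   "W4inv (True, False, False, True) = (True, False, False, True)"
|   "W4inv (True, False, True, False) = (True, False, False, False)"
|   "W4inv (True, False, True, True) = (True, False, True, True)"
|   "W4inv (True, True, False, False) = (True, False, True, False)"
|   "W4inv (True, True, False, True) = (False, True, True, False)"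
|   "W4inv (True, True, True, False) = (False, True, True, True)"
|   "W4inv (True, True, True, True) = (False, True, False, False)"

definition comp4 :: "nat \<Rightarrow> b4 \<Rightarrow> bool" where
  "comp4 k t = (case t of (a,b,c,e) \<Rightarrow> if k = 0 then a else if k = 1 then b else if k = 2 then c else e)"

definition tflip :: "b4 \<Rightarrow> nat \<Rightarrow> b4" where
  "tflip t k = (case t of (a,b,c,e) \<Rightarrow>
     if k = 0 then (\<not>a,b,c,e) else if k = 1 then (a,\<not>b,c,e) else if k = 2 then (a,b,\<not>c,e) else (a,b,c,\<not>e))"

definition Pk :: "b4 \<Rightarrow> nat \<Rightarrow> bool" where
  "Pk t k = odd (\<Sum>i<4. of_bool (comp4 k (g4 (tflip t i))) :: nat)"

definition W4 :: "b4 \<Rightarrow> b4" where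
  "W4 t = (Pk t 0, Pk t 1, Pk t 2, Pk t 3)"

lemma g4_invol: "g4 (g4 t) = t"
proof -
  obtain a b c e where t: "t = (a,b,c,e)" by (cases t) auto
  show ?thesis unfolding t by (cases a; cases b; cases c; cases e) simp_all
qed

lemma sum4: "(\<Sum>i<(4::nat). f i) = f 0 + f 1 + f 2 + (f 3::nat)"
  by (simp add: eval_nat_numeral)

lemma W4_inv: "W4inv (W4 t) = t"
proof -
  obtain a b c e where t: "t = (a,b,c,e)" by (cases t) auto
  show ?thesis unfolding t W4_def Pk_def
    by (cases a; cases b; cases c; cases e) (simp_all add: sum4 comp4_def tflip_def)
qed

definition blk :: "bool list \<Rightarrow> nat \<Rightarrow> b4" where
  "blk x j = (x!(j - j mod 4), x!(j - j mod 4 + 1), x!(j - j mod 4 + 2), x!(j - j mod 4 + 3))"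

definition F :: "nat \<Rightarrow> bool list \<Rightarrow> bool list" where
  "F d x = map (\<lambda>j. comp4 (j mod 4) (g4 (blk x j))) [0..<d]"

lemma base_eq: "j - j mod 4 = 4 * (j div (4::nat))"
  by (simp add: minus_mod_eq_mult_div)

lemma mod_shift: "k < 4 \<Longrightarrow> (j - j mod 4 + k) mod 4 = (k::nat)"
  unfolding base_eq by simp

lemma blk_shift: "k < 4 \<Longrightarrow> blk x (j - j mod 4 + k) = blk x j"
  unfolding blk_def using mod_shift[of k j] by simp

lemma comp4_blk: "comp4 (j mod 4) (blk x j) = x ! j"
proof -
  have "j mod 4 < 4" by simp
  hence "j mod 4 = 0 \<or> j mod 4 = 1 \<or> j mod 4 = 2 \<or> j mod 4 = 3" by linarith
  moreover have "j = j - j mod 4 + j mod 4" by simp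
  ultimately show ?thesis unfolding blk_def comp4_def
    by (smt (verit) add_0_right old.prod.case)
qed

lemma bnd: "4 dvd d \<Longrightarrow> j < d \<Longrightarrow> j - j mod 4 + 3 < (d::nat)"
proof -
  assume "4 dvd d" "j < d"
  then obtain k where k: "d = 4 * k" by (auto elim!: dvdE)
  with \<open>j < d\<close> have "j div 4 < k" by auto
  thus ?thesis unfolding base_eq k by linarith
qed

lemma blk_flip:
  assumes "length x = d" "4 dvd d" "j < d" "i < d"
  shows "blk (x[i:=\<not>x!i]) j = (if j - j mod 4 \<le> i \<and> i < j - j mod 4 + 4
           then tflip (blk x j) (i - (j - j mod 4)) else blk x j)"
proof -
  define b where "b = j - j mod 4"
  have bd: "b + 3 < d" using bnd[OF assms(2,3)] b_def by simp
  show ?thesis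
  proof (cases "b \<le> i \<and> i < b + 4")
    case True
    then obtain k where k: "i = b + k" "k < 4" by (metis add.commute le_Suc_ex less_diff_conv2 add_diff_cancel_right')
    hence "k = 0 \<or> k = 1 \<or> k = 2 \<or> k = 3" by linarith
    then show ?thesis using k True bd assms(1) unfolding blk_def tflip_def b_def[symmetric]
      by (elim disjE) (simp_all add: nth_list_update)
  next
    case False
    hence "i \<noteq> b" "i \<noteq> b+1" "i \<noteq> b+2" "i \<noteq> b+3" by auto
    then have "blk (x[i:=\<not>x!i]) j = blk x j" unfolding blk_def b_def[symmetric]
      by (simp add: nth_list_update_neq)
    moreover have "\<not> (j - j mod 4 \<le> i \<and> i < j - j mod 4 + 4)" using False b_def by simp
    ultimately show ?thesis by (simp only: if_False)
  qed
qed

lemma weightF: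
  assumes "length x = d" "4 dvd d" "j < d"
  shows "odd (\<Sum>i<d. of_bool (F d (x[i:=\<not>x!i]) ! j) :: nat) = Pk (blk x j) (j mod 4)"
proof -
  define b where "b = j - j mod 4"
  have bd: "b + 3 < d" using bnd[OF assms(2,3)] b_def by simp
  define h where "h i = (of_bool (F d (x[i:=\<not>x!i]) ! j) :: nat)" for i
  have h: "h i = of_bool (comp4 (j mod 4) (g4 (blk (x[i:=\<not>x!i]) j)))" for i
    unfolding h_def F_def using assms(3) by simp
  have sub: "{b..<b+4} \<subseteq> {..<d}" using bd by auto
  have "(\<Sum>i<d. h i) = (\<Sum>i\<in>{..<d} - {b..<b+4}. h i) + (\<Sum>i\<in>{b..<b+4}. h i)"
    by (rule sum.subset_diff[OF sub]) simp
  also have "(\<Sum>i\<in>{..<d} - {b..<b+4}. h i) = (\<Sum>i\<in>{..<d} - {b..<b+4}. of_bool (comp4 (j mod 4) (g4 (blk x j))))"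
    by (rule sum.cong) (use assms in \<open>auto simp: h blk_flip b_def\<close>)
  also have "\<dots> = (d - 4) * of_bool (comp4 (j mod 4) (g4 (blk x j)))"
    using sub by (simp add: card_Diff_subset)
  also have "(\<Sum>i\<in>{b..<b+4}. h i) = (\<Sum>k<4. h (b + k))"
  proof -
    have "(\<Sum>i\<in>{0+b..<4+b}. h i) = (\<Sum>k\<in>{0..<4}. h (k + b))"
      by (rule sum.shift_bounds_nat_ivl)
    thus ?thesis by (simp add: atLeast0LessThan add.commute)
  qed
  also have "\<dots> = (\<Sum>k<4. of_bool (comp4 (j mod 4) (g4 (tflip (blk x j) k))))"
    by (rule sum.cong) (use assms bd in \<open>auto simp: h blk_flip b_def\<close>)
  finally have eq: "(\<Sum>i<d. h i) = (d - 4) * of_bool (comp4 (j mod 4) (g4 (blk x j))) + (\<Sum>k<4. of_bool (comp4 (j mod 4) (g4 (tflip (blk x j) k))))" .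
  have "even (d - 4)" using assms(2) by (auto elim!: dvdE simp: right_diff_distrib'[symmetric])
  then show ?thesis unfolding h_def[symmetric] eq Pk_def by simp
qed

lemma carrier_Z2: "carrier (Z2pow d) = hcube_verts d"
  by (simp add: Z2pow_def hcube_verts_def)

lemma length_F[simp]: "length (F d x) = d"
  by (simp add: F_def)

lemma tuple_comp4: "(comp4 0 t, comp4 1 t, comp4 2 t, comp4 3 t) = t"
  by (cases t) (simp add: comp4_def)

lemma blk_F:
  assumes "4 dvd d" "j < d"
  shows "blk (F d x) j = g4 (blk x j)"
proof -
  define b where "b = j - j mod 4"
  have bd: "b + 3 < d" using bnd[OF assms] b_def by simp
  have e: "F d x ! (b + k) = comp4 k (g4 (blk x j))" if "k < 4" for k
  proof -
    have "b + k < d" using bd that by linarith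
    hence "F d x ! (b + k) = comp4 ((b+k) mod 4) (g4 (blk x (b+k)))" by (simp add: F_def)
    thus ?thesis using mod_shift[OF that, of j] blk_shift[OF that, of x j] b_def by simp
  qed
  have "blk (F d x) j = (F d x ! b, F d x ! (b+1), F d x ! (b+2), F d x ! (b+3))"
    by (simp add: blk_def b_def)
  also have "\<dots> = (comp4 0 (g4 (blk x j)), comp4 1 (g4 (blk x j)), comp4 2 (g4 (blk x j)), comp4 3 (g4 (blk x j)))"
    using e[of 0] e[of 1] e[of 2] e[of 3] by simp
  finally show ?thesis by (simp only: tuple_comp4)
qed

lemma FF: "4 dvd d \<Longrightarrow> length x = d \<Longrightarrow> F d (F d x) = x"
  by (rule nth_equalityI) (auto simp: F_def[of d "F d x"] blk_F g4_invol comp4_blk)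

lemma even_case:
  assumes "4 dvd d"
  shows "distance_antimagic (Z2pow d) (hcube_verts d) (hcube_adj d)"
  unfolding distance_antimagic_def distance_antimagic_labelling_def
proof (intro exI conjI)
  show "bij_betw (F d) (hcube_verts d) (carrier (Z2pow d))"
    unfolding carrier_Z2
    by (rule bij_betw_byWitness[where f'="F d"]) (auto simp: hcube_verts_def FF assms)
  have w: "dweight (Z2pow d) (hcube_verts d) (hcube_adj d) (F d) x = map (\<lambda>j. Pk (blk x j) (j mod 4)) [0..<d]"
    if "length x = d" for x
    using that assms by (simp add: dweight_cube weightF del: sum_of_bool_eq)
  show "inj_on (dweight (Z2pow d) (hcube_verts d) (hcube_adj d) (F d)) (hcube_verts d)"
  proof (rule inj_onI)
    fix x y assume x: "x \<in> hcube_verts d" and y: "y \<in> hcube_verts d"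
      and eq: "dweight (Z2pow d) (hcube_verts d) (hcube_adj d) (F d) x = dweight (Z2pow d) (hcube_verts d) (hcube_adj d) (F d) y"
    have lx: "length x = d" and ly: "length y = d" using x y by (auto simp: hcube_verts_def)
    have m: "map (\<lambda>j. Pk (blk x j) (j mod 4)) [0..<d] = map (\<lambda>j. Pk (blk y j) (j mod 4)) [0..<d]"
      using eq w[OF lx] w[OF ly] by simp
    show "x = y"
    proof (rule nth_equalityI)
      show "length x = length y" using lx ly by simp
      fix j assume "j < length x"
      hence j: "j < d" using lx by simp
      define b where "b = j - j mod 4"
      have bd: "b + 3 < d" using bnd[OF assms j] b_def by simp
      have P: "Pk (blk x j) k = Pk (blk y j) k" if "k < 4" for k
      proof -
        have "b + k < d" using bd that by linarith
        hence "Pk (blk x (b+k)) ((b+k) mod 4) = Pk (blk y (b+k)) ((b+k) mod 4)"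
          using arg_cong[OF m, of "\<lambda>l. l ! (b+k)"] by simp
        thus ?thesis using mod_shift[OF that, of j] blk_shift[OF that, of _ j] b_def by simp
      qed
      have "W4 (blk x j) = W4 (blk y j)" unfolding W4_def using P[of 0] P[of 1] P[of 2] P[of 3] by simp
      hence "blk x j = blk y j" by (metis W4_inv)
      thus "x ! j = y ! j" by (metis comp4_blk)
    qed
  qed
qed

lemma odd_case:
  assumes "odd d"
  shows "distance_antimagic (Z2pow d) (hcube_verts d) (hcube_adj d)"
  unfolding distance_antimagic_def distance_antimagic_labelling_def
proof (intro exI conjI)
  show "bij_betw id (hcube_verts d) (carrier (Z2pow d))"
    unfolding carrier_Z2 by simp
  have s: "odd (\<Sum>i<d. of_bool (x[i:=\<not>x!i] ! j) :: nat) = (\<not> x ! j)"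
    if "length x = d" "j < d" for x j
  proof -
    have "(\<Sum>i<d. of_bool (x[i:=\<not>x!i] ! j) :: nat)
        = of_bool (x[j:=\<not>x!j] ! j) + (\<Sum>i\<in>{..<d} - {j}. of_bool (x[i:=\<not>x!i] ! j))"
      using that by (simp add: sum.remove del: sum_of_bool_eq)
    also have "(\<Sum>i\<in>{..<d} - {j}. of_bool (x[i:=\<not>x!i] ! j) :: nat) = (\<Sum>i\<in>{..<d} - {j}. of_bool (x ! j))"
      by (rule sum.cong) auto
    also have "\<dots> = (d - 1) * of_bool (x ! j)" using that by simp
    finally have "(\<Sum>i<d. of_bool (x[i:=\<not>x!i] ! j) :: nat) = of_bool (\<not> x ! j) + (d - 1) * of_bool (x ! j)"
      using that by (simp del: sum_of_bool_eq)
    moreover have "even (d - 1)" using assms that by simp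
    ultimately show ?thesis by simp
  qed
  have w: "dweight (Z2pow d) (hcube_verts d) (hcube_adj d) id x = map Not x" if "length x = d" for x
  proof -
    have "dweight (Z2pow d) (hcube_verts d) (hcube_adj d) id x = map (\<lambda>j. odd (\<Sum>i<d. of_bool (x[i:=\<not>x!i] ! j) :: nat)) [0..<d]"
      using dweight_cube[OF that, of id] by (simp del: sum_of_bool_eq)
    also have "\<dots> = map Not x"
      by (rule nth_equalityI) (use s that in \<open>simp_all del: sum_of_bool_eq\<close>)
    finally show ?thesis .
  qed
  show "inj_on (dweight (Z2pow d) (hcube_verts d) (hcube_adj d) id) (hcube_verts d)"
  proof (rule inj_onI)
    fix x y assume "x \<in> hcube_verts d" "y \<in> hcube_verts d"
      "dweight (Z2pow d) (hcube_verts d) (hcube_adj d) id x = dweight (Z2pow d) (hcube_verts d) (hcube_adj d) id y"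
    hence "map Not x = map Not y" using w by (simp add: hcube_verts_def)
    hence "map Not (map Not x) = map Not (map Not y)" by simp
    thus "x = y" by (simp add: comp_def)
  qed
qed

theorem mainTheorem8:
  fixes d :: nat
  assumes "d \<ge> 3" and "odd d \<or> 4 dvd d"
  shows "distance_antimagic (Z2pow d) (hcube_verts d) (hcube_adj d)"
  using assms(2) odd_case even_case by blast

end
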